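(* For every integer $n>3$ there exists a latin square of order $n$ containing a cell that is not contained in any transversal of the square.
   Context: A latin square of order $n$ is an $n\times n$ array of $n$ symbols in which each symbol occurs exactly once in each row and column. A transversal is a set of $n$ cells, one from each row and one from each column, no two containing the same symbol. *)

theory Defs
  imports Main
begin

definition latin_square :: "nat \<Rightarrow> (nat \<Rightarrow> nat \<Rightarrow> nat) \<Rightarrow> bool" where
  "latin_square n L \<longleftrightarrow>
     (\<forall>i<n. \<forall>j<n. L i j < n) \<and>
     (\<forall>i<n. \<forall>s<n. \<exists>!j. j < n \<and> L i j = s) \<and>
     (\<forall>j<n. \<forall>s<n. \<exists>!i. i < n \<and> L i j = s)"

definition transversal :: "nat \<Rightarrow> (nat \<Rightarrow> nat \<Rightarrow> nat) \<Rightarrow> (nat \<times> nat) set \<Rightarrow> bool" where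
  "transversal n L T \<longleftrightarrow>
     T \<subseteq> {0..<n} \<times> {0..<n} \<and> card T = n \<and>
     (\<forall>i<n. \<exists>!j. (i, j) \<in> T) \<and>
     (\<forall>j<n. \<exists>!i. (i, j) \<in> T) \<and>
     inj_on (\<lambda>(i, j). L i j) T"

end

theory Submission
  imports Defs
begin

lemma mod_small2:
  fixes x n :: nat
  assumes "x < 2*n"
  shows "x mod n = (if x < n then x else x - n)"
proof (cases "x < n")
  case True then show ?thesis by simp
next
  case False
  then have "x - n < n" using assms by arith
  then show ?thesis using False by (simp add: mod_if)
qed

lemma mod_cancel_lt:
  fixes a b j n :: nat
  assumes "a < n" "b < n" "(a + j) mod n = (b + j) mod n"
  shows "a = b"
proof -
  have "(a + j mod n) mod n = (b + j mod n) mod n"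
    using assms(3) by (simp add: mod_add_right_eq)
  moreover have "j mod n < n" using assms(1) by simp
  ultimately show ?thesis using assms(1,2) mod_small2[of "a + j mod n" n] mod_small2[of "b + j mod n" n]
    by (auto split: if_splits)
qed

lemma gauss2: "2 * (\<Sum>i<n. i) = n * (n - 1::nat)"
proof (induction n)
  case 0 show ?case by simp
next
  case (Suc n)
  have "2 * (\<Sum>i<Suc n. i) = 2 * (\<Sum>i<n. i) + 2 * n" by simp
  also have "\<dots> = n * (n - 1) + 2 * n" using Suc by simp
  also have "\<dots> = Suc n * (Suc n - 1)" by (cases n) auto
  finally show ?case .
qed

lemma inj_unique:
  fixes g :: "nat \<Rightarrow> nat"
  assumes inj: "inj_on g {..<n}" and rng: "\<forall>x<n. g x < n"
  shows "\<forall>s<n. \<exists>!x. x < n \<and> g x = s"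
proof (intro allI impI)
  fix s assume s: "s < n"
  have im: "g ` {..<n} = {..<n}"
    using endo_inj_surj[of "{..<n}" g] inj rng by auto
  then have "s \<in> g ` {..<n}" using s by simp
  then obtain x where x: "x < n" "g x = s" by auto
  show "\<exists>!x. x < n \<and> g x = s"
  proof
    show "x < n \<and> g x = s" using x by simp
  next
    fix y assume "y < n \<and> g y = s"
    then show "y = x" using x inj unfolding inj_on_def by auto
  qed
qed

lemma latin_intro:
  assumes rng: "\<forall>i<n. \<forall>j<n. L i j < n"
    and rows: "\<forall>i<n. inj_on (L i) {..<n}"
    and cols: "\<forall>j<n. inj_on (\<lambda>i. L i j) {..<n}"
  shows "latin_square n L"
  unfolding latin_square_def
proof (intro conjI)
  show "\<forall>i<n. \<forall>j<n. L i j < n" by fact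
  show "\<forall>i<n. \<forall>s<n. \<exists>!j. j < n \<and> L i j = s"
    using inj_unique rows rng by blast
  show "\<forall>j<n. \<forall>s<n. \<exists>!i. i < n \<and> L i j = s"
  proof (intro allI impI)
    fix j s assume "j < n" "s < n"
    then show "\<exists>!i. i < n \<and> L i j = s"
      using inj_unique[of "\<lambda>i. L i j" n] cols rng by blast
  qed
qed

lemma key:
  assumes lat: "latin_square n L" and tr: "transversal n L T"
  shows "\<exists>f. (\<forall>i<n. f i < n \<and> (i, f i) \<in> T) \<and> inj_on f {..<n} \<and> inj_on (\<lambda>i. L i (f i)) {..<n}
           \<and> (\<Sum>i<n. f i) = (\<Sum>i<n. i) \<and> (\<Sum>i<n. L i (f i)) = (\<Sum>i<n. i)"
proof -
  have sub: "T \<subseteq> {0..<n} \<times> {0..<n}" and rowU: "\<forall>i<n. \<exists>!j. (i, j) \<in> T"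
    and colU: "\<forall>j<n. \<exists>!i. (i, j) \<in> T" and injT: "inj_on (\<lambda>(i, j). L i j) T"
    using tr unfolding transversal_def by auto
  have Lr: "\<forall>i<n. \<forall>j<n. L i j < n" using lat unfolding latin_square_def by auto
  define f where "f i = (THE j. (i, j) \<in> T)" for i
  have fT: "(i, f i) \<in> T" if "i < n" for i
    unfolding f_def using theI'[OF rowU[rule_format, OF that]] .
  have fn: "f i < n" if "i < n" for i using fT[OF that] sub by auto
  have finj: "inj_on f {..<n}"
  proof (rule inj_onI)
    fix x y assume "x \<in> {..<n}" "y \<in> {..<n}" "f x = f y"
    then have "(x, f x) \<in> T" "(y, f x) \<in> T" "f x < n" using fT fn by (auto, metis)
    then show "x = y" using colU by blast
  qed
  have linj: "inj_on (\<lambda>i. L i (f i)) {..<n}"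
  proof (rule inj_onI)
    fix x y assume "x \<in> {..<n}" "y \<in> {..<n}" "L x (f x) = L y (f y)"
    then have "(x, f x) \<in> T" "(y, f y) \<in> T" "(\<lambda>(i, j). L i j) (x, f x) = (\<lambda>(i, j). L i j) (y, f y)"
      using fT by auto
    then show "x = y" using injT unfolding inj_on_def by blast
  qed
  have fim: "f ` {..<n} = {..<n}"
    using endo_inj_surj[of "{..<n}" f] finj fn by auto
  have lim: "(\<lambda>i. L i (f i)) ` {..<n} = {..<n}"
    using endo_inj_surj[of "{..<n}" "\<lambda>i. L i (f i)"] linj fn Lr by auto
  have s1: "(\<Sum>i<n. f i) = (\<Sum>i<n. i)"
    using sum.reindex[OF finj, of "\<lambda>x. x"] fim by simp
  have s2: "(\<Sum>i<n. L i (f i)) = (\<Sum>i<n. i)"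
    using sum.reindex[OF linj, of "\<lambda>x. x"] lim by simp
  show ?thesis using fT fn finj linj s1 s2 by blast
qed

lemma sum_mod_shift:
  fixes L :: "nat \<Rightarrow> nat \<Rightarrow> nat" and r :: "nat \<Rightarrow> nat \<Rightarrow> nat"
  assumes "\<And>i j. L i j = (r i j + j) mod n"
    and "(\<Sum>i<n. f i) = (\<Sum>i<n. i)" and "(\<Sum>i<n. L i (f i)) = (\<Sum>i<n. i)"
  shows "(\<Sum>i<n. i) mod n = ((\<Sum>i<n. r i (f i)) + (\<Sum>i<n. i)) mod n"
proof -
  have "(\<Sum>i<n. i) mod n = (\<Sum>i<n. (r i (f i) + f i) mod n) mod n"
    using assms(1,3) by simp
  also have "\<dots> = (\<Sum>i<n. r i (f i) + f i) mod n" by (rule mod_sum_eq)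
  also have "\<dots> = ((\<Sum>i<n. r i (f i)) + (\<Sum>i<n. i)) mod n"
    using assms(2) by (simp add: sum.distrib)
  finally show ?thesis .
qed

lemma even_case:
  assumes ev: "even n" and pos: "n > 0"
  shows "latin_square n (\<lambda>i j. (i + j) mod n) \<and> (\<forall>T. \<not> transversal n (\<lambda>i j. (i + j) mod n) T)"
proof
  show lat: "latin_square n (\<lambda>i j. (i + j) mod n)"
  proof (rule latin_intro)
    show "\<forall>i<n. \<forall>j<n. (i + j) mod n < n" using pos by simp
    show "\<forall>i<n. inj_on (\<lambda>j. (i + j) mod n) {..<n}"
      by (auto simp: inj_on_def) (metis add.commute mod_cancel_lt)
    show "\<forall>j<n. inj_on (\<lambda>i. (i + j) mod n) {..<n}"
      by (auto simp: inj_on_def intro: mod_cancel_lt)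
  qed
  show "\<forall>T. \<not> transversal n (\<lambda>i j. (i + j) mod n) T"
  proof (intro allI notI)
    fix T assume tr: "transversal n (\<lambda>i j. (i + j) mod n) T"
    obtain f where s1: "(\<Sum>i<n. f i) = (\<Sum>i<n. i)"
      and s2: "(\<Sum>i<n. (i + f i) mod n) = (\<Sum>i<n. i)"
      using key[OF lat tr] by auto
    have "(\<Sum>i<n. i) mod n = ((\<Sum>i<n. i) + (\<Sum>i<n. i)) mod n"
      using sum_mod_shift[of "\<lambda>i j. (i + j) mod n" "\<lambda>i j. i" n f] s1 s2 by simp
    also have "\<dots> = (n * (n - 1)) mod n" using gauss2[of n] by (metis mult_2)
    also have "\<dots> = 0" by simp
    finally obtain q where q: "(\<Sum>i<n. i) = n * q" by auto
    have "n * (2 * q) = n * (n - 1)" using gauss2[of n] q by (simp add: algebra_simps)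
    then have "2 * q = n - 1" using pos by simp
    then show False using ev pos by presburger
  qed
qed

definition rr :: "nat \<Rightarrow> nat \<Rightarrow> nat \<Rightarrow> nat" where
  "rr n i j = (if 3 \<le> i \<or> j = 0 then i
     else if j = n - 1 then (if i = 0 then 2 else if i = 1 then 0 else 1)
     else if odd j then (if i = 0 then 1 else if i = 1 then 2 else 0)
     else (if i = 0 then 1 else if i = 1 then 0 else 2))"

definition LL :: "nat \<Rightarrow> nat \<Rightarrow> nat \<Rightarrow> nat" where
  "LL n i j = (rr n i j + j) mod n"

lemma rr_lt: "i < n \<Longrightarrow> 5 \<le> n \<Longrightarrow> rr n i j < n"
  by (auto simp: rr_def)

lemma rr_small: "i < 3 \<Longrightarrow> rr n i j \<le> 2"
  by (auto simp: rr_def)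

lemma rr_col_inj:
  assumes "i < n" "i' < n" "j < n" "5 \<le> n" "rr n i j = rr n i' j"
  shows "i = i'"
proof -
  have s1: "rr n i j \<le> 2" if "i < 3" for i using rr_small[OF that] .
  have s2: "rr n i j = i" if "3 \<le> i" for i using that by (simp add: rr_def)
  consider "3 \<le> i" | "3 \<le> i'" | "i < 3" "i' < 3" by linarith
  then show ?thesis
  proof cases
    case 1 then show ?thesis using s1[of i'] s2[of i'] s2[of i] assms(5) by (cases "i' < 3") auto
  next
    case 2 then show ?thesis using s1[of i] s2[of i'] s2[of i] assms(5) by (cases "i < 3") auto
  next
    case 3
    then have "i = 0 \<or> i = 1 \<or> i = 2" "i' = 0 \<or> i' = 1 \<or> i' = 2" by auto
    then show ?thesis using assms(5) unfolding rr_def by (elim disjE; simp; auto split: if_splits)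
  qed
qed

lemma LL_row0: "j < n \<Longrightarrow> 5 \<le> n \<Longrightarrow>
   LL n 0 j = (if j = 0 then 0 else if j = n - 1 then 1 else j + 1)"
  by (simp add: LL_def rr_def mod_small2; presburger)

lemma LL_row1: "odd n \<Longrightarrow> j < n \<Longrightarrow> 5 \<le> n \<Longrightarrow>
   LL n 1 j = (if j = 0 then 1 else if j = n - 1 then n - 1 else if odd j then (if j + 2 = n then 0 else j + 2) else j)"
  by (simp add: LL_def rr_def mod_small2; presburger)

lemma LL_row2: "odd n \<Longrightarrow> j < n \<Longrightarrow> 5 \<le> n \<Longrightarrow>
   LL n 2 j = (if j = 0 then 2 else if j = n - 1 then 0 else if odd j then j else j + 2)"
  by (simp add: LL_def rr_def mod_small2; presburger)


lemma row_inj0: "5 \<le> n \<Longrightarrow> inj_on (LL n 0) {..<n}"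
proof (rule inj_on_inverseI[where g="\<lambda>v. if v = 0 then 0 else if v = 1 then n - 1 else v - 1"])
  fix x assume "5 \<le> n" "x \<in> {..<n}"
  then show "(\<lambda>v. if v = 0 then 0 else if v = 1 then n - 1 else v - 1) (LL n 0 x) = x"
    using LL_row0[of x n] by auto
qed

lemma row_inj1: "odd n \<Longrightarrow> 5 \<le> n \<Longrightarrow> inj_on (LL n 1) {..<n}"
proof (rule inj_on_inverseI[where g="\<lambda>v. if v = 1 then 0 else if v = n - 1 then n - 1 else if v = 0 then n - 2
   else if odd v then v - 2 else v"])
  fix x assume a: "odd n" "5 \<le> n" "x \<in> {..<n}"
  consider "x = 0" | "x = n - 1" | "x \<noteq> 0" "x \<noteq> n - 1" "odd x" "x + 2 = n"
    | "x \<noteq> 0" "x \<noteq> n - 1" "odd x" "x + 2 \<noteq> n" | "x \<noteq> 0" "x \<noteq> n - 1" "even x" by blast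
  then show "(\<lambda>v. if v = 1 then 0 else if v = n - 1 then n - 1 else if v = 0 then n - 2
   else if odd v then v - 2 else v) (LL n 1 x) = x"
  proof cases
    case 1 then show ?thesis using a LL_row1[of n x] by simp
  next
    case 2 then show ?thesis using a LL_row1[of n x] by simp
  next
    case 3 then show ?thesis using a LL_row1[of n x] by simp
  next
    case 4 then have "LL n 1 x = x + 2" using a LL_row1[of n x] by simp
    moreover have "x + 2 < n - 1" using 4 a(1) \<open>x \<in> {..<n}\<close> by (simp; presburger)
    ultimately show ?thesis using 4 by simp
  next
    case 5 then have "LL n 1 x = x" using a LL_row1[of n x] by simp
    moreover have "x \<noteq> 1" using 5 by presburger
    ultimately show ?thesis using 5 by simp
  qed
qed

lemma row_inj2: "odd n \<Longrightarrow> 5 \<le> n \<Longrightarrow> inj_on (LL n 2) {..<n}"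
proof (rule inj_on_inverseI[where g="\<lambda>v. if v = 2 then 0 else if v = 0 then n - 1
   else if odd v then v else v - 2"])
  fix x assume a: "odd n" "5 \<le> n" "x \<in> {..<n}"
  consider "x = 0" | "x = n - 1" | "x \<noteq> 0" "x \<noteq> n - 1" "odd x"
    | "x \<noteq> 0" "x \<noteq> n - 1" "even x" by blast
  then show "(\<lambda>v. if v = 2 then 0 else if v = 0 then n - 1
   else if odd v then v else v - 2) (LL n 2 x) = x"
  proof cases
    case 1 then show ?thesis using a LL_row2[of n x] by simp
  next
    case 2 then show ?thesis using a LL_row2[of n x] by simp
  next
    case 3 moreover have "x \<noteq> 2" using 3 by presburger
    ultimately show ?thesis using a LL_row2[of n x] by simp
  next
    case 4 then have "LL n 2 x = x + 2" using a LL_row2[of n x] by simp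
    then show ?thesis using 4 by simp
  qed
qed

lemma odd_latin:
  assumes n: "odd n" "5 \<le> n"
  shows "latin_square n (LL n)"
proof (rule latin_intro)
  show "\<forall>i<n. \<forall>j<n. LL n i j < n" using n by (simp add: LL_def)
  show "\<forall>i<n. inj_on (LL n i) {..<n}"
  proof (intro allI impI)
    fix i assume i: "i < n"
    show "inj_on (LL n i) {..<n}"
    proof (cases "i < 3")
      case True
      then have "i = 0 \<or> i = 1 \<or> i = 2" by auto
      then show ?thesis using row_inj0 row_inj1 row_inj2 n by auto
    next
      case False
      then have e: "LL n i j = (i + j) mod n" for j by (simp add: LL_def rr_def)
      show ?thesis
        by (rule inj_onI) (simp add: e, metis add.commute mod_cancel_lt lessThan_iff)
    qed
  qed
  show "\<forall>j<n. inj_on (\<lambda>i. LL n i j) {..<n}"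
  proof (intro allI impI inj_onI)
    fix j x y assume j: "j < n" and xy: "x \<in> {..<n}" "y \<in> {..<n}" "LL n x j = LL n y j"
    then have "rr n x j = rr n y j"
      using mod_cancel_lt[of "rr n x j" n "rr n y j" j] rr_lt[of x n j] rr_lt[of y n j] n
      by (simp add: LL_def)
    then show "x = y" using rr_col_inj[of x n y j] xy j n by simp
  qed
qed

lemma sum_split3:
  fixes g :: "nat \<Rightarrow> nat"
  assumes "3 \<le> n"
  shows "sum g {..<n} = g 0 + g 1 + g 2 + sum g {3..<n}"
proof -
  have "{..<n} = {..<3} \<union> {3..<n}" using assms by auto
  moreover have "sum g ({..<3} \<union> {3..<n}) = sum g {..<3} + sum g {3..<n}"
    by (rule sum.union_disjoint) auto
  ultimately have "sum g {..<n} = sum g {..<3} + sum g {3..<n}" by simp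
  moreover have "sum g {..<3} = g 0 + g 1 + g 2" by (simp add: numeral_3_eq_3 numeral_2_eq_2)
  ultimately show ?thesis by simp
qed

lemma odd_case:
  assumes n: "odd n" "5 \<le> n" and tr: "transversal n (LL n) T"
  shows "(0, 0) \<notin> T"
proof
  assume T00: "(0, 0) \<in> T"
  have lat: "latin_square n (LL n)" using odd_latin n .
  obtain f where fT: "\<forall>i<n. f i < n \<and> (i, f i) \<in> T" and finj: "inj_on f {..<n}"
    and linj: "inj_on (\<lambda>i. LL n i (f i)) {..<n}"
    and s1: "(\<Sum>i<n. f i) = (\<Sum>i<n. i)" and s2: "(\<Sum>i<n. LL n i (f i)) = (\<Sum>i<n. i)"
    using key[OF lat tr] by blast
  have rowU: "\<forall>i<n. \<exists>!j. (i, j) \<in> T" using tr unfolding transversal_def by auto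
  have "(0, f 0) \<in> T" using fT n by auto
  then have f0: "f 0 = 0" using rowU T00 n by (metis less_le_trans zero_less_numeral)
  have f1: "f 1 \<noteq> 0" using inj_onD[OF finj, of 1 0] f0 n by auto
  have f2: "f 2 \<noteq> 0" using inj_onD[OF finj, of 2 0] f0 n by auto
  have f2n: "f 2 < n" using fT n by auto
  define S where "S = (\<Sum>i<n. i)"
  define R where "R = (\<Sum>i\<in>{3..<n}. i)"
  define X where "X = rr n 0 (f 0) + rr n 1 (f 1) + rr n 2 (f 2)"
  have m1: "S mod n = ((\<Sum>i<n. rr n i (f i)) + S) mod n"
    unfolding S_def using sum_mod_shift[of "LL n" "rr n" n f] s1 s2 by (simp add: LL_def)
  have Sz: "S mod n = 0"
  proof -
    have "even (n - 1)" using n by simp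
    then obtain q where q: "n - 1 = 2 * q" by blast
    have "2 * S = 2 * (n * q)" using gauss2[of n] q unfolding S_def by simp
    then have "S = n * q" by simp
    then show ?thesis by simp
  qed
  have Rr: "(\<Sum>i\<in>{3..<n}. rr n i (f i)) = R" unfolding R_def
    by (rule sum.cong) (auto simp: rr_def)
  have sumrr: "(\<Sum>i<n. rr n i (f i)) = X + R"
    using sum_split3[of n "\<lambda>i. rr n i (f i)"] n Rr unfolding X_def by simp
  have S3: "S = 3 + R" using sum_split3[of n "\<lambda>i. i"] n unfolding S_def R_def by simp
  have "(X + R) mod n = ((X + R) + S mod n) mod n" using Sz by simp
  also have "\<dots> = ((X + R) + S) mod n" by (simp add: mod_add_right_eq)
  also have "\<dots> = S mod n" using m1 sumrr by simp
  also have "\<dots> = (3 + R) mod n" using S3 by simp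
  finally have eqm: "(X + R) mod n = (3 + R) mod n" .
  have r0: "rr n 0 (f 0) = 0" using f0 by (simp add: rr_def)
  have r1: "rr n 1 (f 1) = 0 \<or> rr n 1 (f 1) = 2" using f1 by (auto simp: rr_def)
  have r2: "rr n 2 (f 2) \<le> 2" using rr_small by simp
  have r2b: "rr n 2 (f 2) = 1 \<Longrightarrow> f 2 = n - 1" using f2 by (auto simp: rr_def split: if_splits)
  have "X < n" using r0 r1 r2 n unfolding X_def by auto
  then have "X = 3" using mod_cancel_lt[OF _ _ eqm] n by simp
  then have "rr n 2 (f 2) = 1" using r0 r1 r2 unfolding X_def by auto
  then have f2e: "f 2 = n - 1" using r2b by simp
  have "LL n 2 (f 2) = 0" using LL_row2[of n "n - 1"] n f2e by simp
  moreover have "LL n 0 (f 0) = 0" using f0 n by (simp add: LL_def rr_def)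
  ultimately have "(2::nat) = 0" using inj_onD[OF linj, of 2 0] n by simp
  then show False by simp
qed

theorem theorem1p4:
  fixes n :: nat
  assumes "n > 3"
  shows "\<exists>L. latin_square n L \<and>
           (\<exists>i<n. \<exists>j<n. \<forall>T. transversal n L T \<longrightarrow> (i, j) \<notin> T)"
proof (cases "even n")
  case True
  have "n > 0" using assms by simp
  then have "latin_square n (\<lambda>i j. (i + j) mod n) \<and> (\<forall>T. \<not> transversal n (\<lambda>i j. (i + j) mod n) T)"
    using even_case True by blast
  then show ?thesis using assms by (intro exI[of _ "\<lambda>i j. (i + j) mod n"]) auto
next
  case False
  then have n: "odd n" "5 \<le> n" using assms by presburger+
  show ?thesis
  proof (rule exI[of _ "LL n"], rule conjI)
    show "latin_square n (LL n)" using odd_latin n .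
    show "\<exists>i<n. \<exists>j<n. \<forall>T. transversal n (LL n) T \<longrightarrow> (i, j) \<notin> T"
    proof -
      have "\<forall>T. transversal n (LL n) T \<longrightarrow> (0, 0) \<notin> T" using odd_case n by blast
      moreover have "(0::nat) < n" using n by simp
      ultimately show ?thesis by blast
    qed
  qed
qed

end
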